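(* Let $M$ be a smooth compact manifold with distance $d$ induced by a Riemannian metric, and let $\omega:\Lambda\times M\to M$ be an IFS. For every $\Delta>0$ there exists $\delta>0$ such that if $\{x_0,\dots,x_n\}$ is a finite $\delta$-chain with sequence of parameters $\sigma=(\lambda_1,\dots,\lambda_n)$, then there exist an IFS $\tilde\omega:\tilde\Lambda\times M\to M$ with $d_H(\omega,\tilde\omega)<\Delta$ and a sequence $\tilde\sigma=(\tilde\lambda_1,\dots,\tilde\lambda_n)$ in $\tilde\Lambda$ such that $(\sigma,\tilde\sigma)$ is $\Delta$-compatible and $d(\tilde\omega_{\tilde\sigma_k}(x_0),x_k)<\Delta$ for $k=0,\dots,n$.
   Context: An IFS with phase space $M$ is given by a compact metric space $\Lambda$ (parameter space) and a continuous map $\omega:\Lambda\times M\to M$; write $\omega_\lambda=\omega(\lambda,\cdot)$. $d_{C^0}(f,g)=\max_x d(f(x),g(x))$ on continuous self-maps of $M$; $d_H(\omega,\tilde\omega)$ is the Hausdorff distance with respect to $d_{C^0}$ between the sets $\{\omega_\lambda:\lambda\in\Lambda\}$ and $\{\tilde\omega_\lambda:\lambda\in\tilde\Lambda\}$. A finite sequence $\{x_0,\dots,x_n\}$ is a finite $\delta$-chain with sequence of parameters $(\lambda_1,\dots,\lambda_n)$ if $d(x_k,\omega_{\lambda_k}(x_{k-1}))\le\delta$ for $k=1,\dots,n$. For a sequence $\tilde\sigma=(\tilde\lambda_1,\dots)$, $\tilde\omega_{\tilde\sigma_0}=\mathrm{id}$ and $\tilde\omega_{\tilde\sigma_k}=\tilde\omega_{\tilde\lambda_k}\circ\cdots\circ\tilde\omega_{\tilde\lambda_1}$.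 Sequences $\sigma=(\lambda_k)$ in $\Lambda$ and $\tilde\sigma=(\tilde\lambda_k)$ in $\tilde\Lambda$ of the same length form a $\Delta$-compatible pair if $d_{C^0}(\omega_{\lambda_k},\tilde\omega_{\tilde\lambda_k})<\Delta$ for all $k$. *)

theory Defs
  imports "HOL-Analysis.Analysis"
begin

fun Ck :: "nat \<Rightarrow> 'a::euclidean_space set \<Rightarrow> ('a \<Rightarrow> 'b::real_normed_vector) \<Rightarrow> bool" where
  "Ck 0 S f = continuous_on S f"
| "Ck (Suc k) S f = (continuous_on S f \<and>
     (\<exists>D. (\<forall>i\<in>Basis. \<forall>x\<in>S. ((\<lambda>t. f (x + t *\<^sub>R i)) has_vector_derivative D i x) (at 0))
          \<and> (\<forall>i\<in>Basis. Ck k S (D i))))"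

definition smooth_on :: "'a::euclidean_space set \<Rightarrow> ('a \<Rightarrow> 'b::real_normed_vector) \<Rightarrow> bool" where
  "smooth_on S f \<longleftrightarrow> (\<forall>k. Ck k S f)"

(* smooth embedded submanifold of a Euclidean space (slice charts), of some fixed dimension m *)
definition smooth_submanifold :: "'a::euclidean_space set \<Rightarrow> bool" where
  "smooth_submanifold M \<longleftrightarrow> (\<exists>m. \<forall>p\<in>M. \<exists>U V (\<phi>::'a\<Rightarrow>'a) \<psi> B.
      open U \<and> p \<in> U \<and> open V \<and> B \<subseteq> Basis \<and> card B = m \<and>
      smooth_on U \<phi> \<and> smooth_on V \<psi> \<and> \<phi> ` U = V \<and>
      (\<forall>x\<in>U. \<psi> (\<phi> x) = x) \<and> (\<forall>y\<in>V. \<phi> (\<psi> y) = y) \<and>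
      \<phi> ` (U \<inter> M) = V \<inter> span B)"

(* Riemannian (intrinsic length) distance on M induced by the Euclidean metric;
   = \<infinity> between different components *)
definition riem_dist :: "'a::euclidean_space set \<Rightarrow> 'a \<Rightarrow> 'a \<Rightarrow> ereal" where
  "riem_dist M x y = Inf {ereal (integral {0..1} (\<lambda>t. norm (vector_derivative g (at t)))) | g.
      g piecewise_C1_differentiable_on {0..1} \<and>
      (\<lambda>t. norm (vector_derivative g (at t))) integrable_on {0..1} \<and>
      g ` {0..1} \<subseteq> M \<and> g 0 = x \<and> g 1 = y}"

definition IFS :: "'l::metric_space set \<Rightarrow> 'a::topological_space set \<Rightarrow> ('l \<Rightarrow> 'a \<Rightarrow> 'a) \<Rightarrow> bool" where
  "IFS \<Lambda> M \<omega> \<longleftrightarrow> compact \<Lambda> \<and> continuous_on (\<Lambda> \<times> M) (\<lambda>(l, x). \<omega> l x) \<and>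
     (\<forall>l\<in>\<Lambda>. \<forall>x\<in>M. \<omega> l x \<in> M)"

definition dC0 :: "('a \<Rightarrow> 'a \<Rightarrow> ereal) \<Rightarrow> 'a set \<Rightarrow> ('a \<Rightarrow> 'a) \<Rightarrow> ('a \<Rightarrow> 'a) \<Rightarrow> ereal" where
  "dC0 d M f g = (SUP x\<in>M. d (f x) (g x))"

definition dH :: "('a \<Rightarrow> 'a \<Rightarrow> ereal) \<Rightarrow> 'a set \<Rightarrow> 'l set \<Rightarrow> ('l \<Rightarrow> 'a \<Rightarrow> 'a) \<Rightarrow> 'm set \<Rightarrow> ('m \<Rightarrow> 'a \<Rightarrow> 'a) \<Rightarrow> ereal" where
  "dH d M \<Lambda> \<omega> \<Lambda>' \<omega>' = max (SUP l\<in>\<Lambda>. INF l'\<in>\<Lambda>'. dC0 d M (\<omega> l) (\<omega>' l'))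
                             (SUP l'\<in>\<Lambda>'. INF l\<in>\<Lambda>. dC0 d M (\<omega> l) (\<omega>' l'))"

fun comp_seq :: "('l \<Rightarrow> 'a \<Rightarrow> 'a) \<Rightarrow> (nat \<Rightarrow> 'l) \<Rightarrow> nat \<Rightarrow> 'a \<Rightarrow> 'a" where
  "comp_seq \<omega> \<sigma> 0 = id"
| "comp_seq \<omega> \<sigma> (Suc k) = \<omega> (\<sigma> (Suc k)) \<circ> comp_seq \<omega> \<sigma> k"

end

theory Submission
  imports Defs
begin


definition plen :: "(real \<Rightarrow> 'a::euclidean_space) \<Rightarrow> real" where
  "plen g = integral {0..1} (\<lambda>t. norm (vector_derivative g (at t)))"

definition rp :: "'a::euclidean_space set \<Rightarrow> (real \<Rightarrow> 'a) \<Rightarrow> 'a \<Rightarrow> 'a \<Rightarrow> bool" where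
  "rp M g x y \<longleftrightarrow> g piecewise_C1_differentiable_on {0..1} \<and>
      (\<lambda>t. norm (vector_derivative g (at t))) integrable_on {0..1} \<and>
      g ` {0..1} \<subseteq> M \<and> g 0 = x \<and> g 1 = y"

lemma riem_le: "rp M g x y \<Longrightarrow> riem_dist M x y \<le> ereal (plen g)"
  unfolding riem_dist_def rp_def plen_def
  by (rule Inf_lower) blast

lemma riem_ge: "(\<And>g. rp M g x y \<Longrightarrow> c \<le> plen g) \<Longrightarrow> ereal c \<le> riem_dist M x y"
  unfolding riem_dist_def
  by (rule Inf_greatest) (auto simp: rp_def plen_def)

lemma chord:
  assumes "rp M g x y" shows "norm (y - x) \<le> plen g"
proof -
  from assms have pc: "g piecewise_C1_differentiable_on {0..1}" and int: "(\<lambda>t. norm (vector_derivative g (at t))) integrable_on {0..1}"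
    and e: "g 0 = x" "g 1 = y" by (auto simp: rp_def)
  from pc obtain S where S: "finite S" "g C1_differentiable_on ({0..1} - S)" and c: "continuous_on {0..1} g"
    by (auto simp: piecewise_C1_differentiable_on_def)
  have "((\<lambda>t. vector_derivative g (at t)) has_integral (g 1 - g 0)) {0..1}"
  proof (rule fundamental_theorem_of_calculus_interior_strong[OF S(1)])
    fix t assume "t \<in> {0<..<1} - S"
    then have "t \<in> {0..1} - S" by auto
    then show "(g has_vector_derivative vector_derivative g (at t)) (at t)"
      using S(2) by (auto simp: C1_differentiable_on_eq vector_derivative_works)
  qed (use c in auto)
  then have "norm (integral {0..1} (\<lambda>t. vector_derivative g (at t))) \<le> plen g"
    unfolding plen_def
    by (intro integral_norm_bound_integral) (use int in \<open>auto simp: has_integral_integrable\<close>)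
  then show ?thesis using \<open>((\<lambda>t. vector_derivative g (at t)) has_integral (g 1 - g 0)) {0..1}\<close> e
    by (simp add: integral_unique)
qed

lemma riem_ge_norm: "ereal (norm (y - x)) \<le> riem_dist M x y"
  by (rule riem_ge) (rule chord)



lemma join_len:
  fixes g1 g2 :: "real \<Rightarrow> 'a::euclidean_space"
  assumes "rp M g1 x y" "rp M g2 y z"
  shows "rp M (g1 +++ g2) x z \<and> plen (g1 +++ g2) = plen g1 + plen g2"
proof -
  have v1: "valid_path g1" and v2: "valid_path g2"
    using assms by (auto simp: rp_def valid_path_def)
  have e: "g1 0 = x" "g1 1 = y" "g2 0 = y" "g2 1 = z" using assms by (auto simp: rp_def)
  have vj: "valid_path (g1 +++ g2)"
    using v1 v2 e by (intro valid_path_join) (auto simp: pathfinish_def pathstart_def)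
  obtain s1 s2
    where s1: "finite s1" "\<forall>x\<in>{0..1} - s1. g1 differentiable at x"
      and s2: "finite s2" "\<forall>x\<in>{0..1} - s2. g2 differentiable at x"
    using v1 v2
    by (auto simp: valid_path_def piecewise_C1_differentiable_on_def C1_differentiable_on_eq)
  have 1: "((\<lambda>x. norm (vector_derivative g1 (at x))) has_integral plen g1) {0..1}"
   and 2: "((\<lambda>x. norm (vector_derivative g2 (at x))) has_integral plen g2) {0..1}"
    using assms by (auto simp: rp_def plen_def has_integral_integral)
  have i1: "((\<lambda>x. 2 * norm (vector_derivative g1 (at (2*x)))) has_integral plen g1) {0..1/2}"
   and i2: "((\<lambda>x. 2 * norm (vector_derivative g2 (at (2*x - 1)))) has_integral plen g2) {1/2..1}"
    using has_integral_affinity01 [OF 1, where m= 2 and c=0, THEN has_integral_mult_right [where c=2]]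
          has_integral_affinity01 [OF 2, where m= 2 and c="-1", THEN has_integral_mult_right [where c=2]]
    by (simp_all only: image_affinity_atLeastAtMost_div_diff, simp_all add: mult_ac)
  have g1: "vector_derivative (\<lambda>x. if x*2 \<le> 1 then g1 (2*x) else g2 (2*x - 1)) (at z) =
            2 *\<^sub>R vector_derivative g1 (at (z*2))"
      if "0 \<le> z" "z*2 < 1" "z*2 \<notin> s1" for z
  proof (rule vector_derivative_at [OF has_vector_derivative_transform_within])
    show "0 < \<bar>z - 1/2\<bar>"
      using that by auto
    have "((*) 2 has_vector_derivative 2) (at z)"
      by (simp add: has_vector_derivative_def has_derivative_def bounded_linear_mult_left)
    moreover have "(g1 has_vector_derivative vector_derivative g1 (at (z * 2))) (at (2 * z))"
      using s1 that by (auto simp: algebra_simps vector_derivative_works)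
    ultimately
    show "((\<lambda>x. g1 (2 * x)) has_vector_derivative 2 *\<^sub>R vector_derivative g1 (at (z * 2))) (at z)"
      by (intro vector_diff_chain_at [simplified o_def])
  qed (use that in \<open>simp_all add: dist_real_def abs_if split: if_split_asm\<close>)
  have g2: "vector_derivative (\<lambda>x. if x*2 \<le> 1 then g1 (2*x) else g2 (2*x - 1)) (at z) =
            2 *\<^sub>R vector_derivative g2 (at (z*2 - 1))"
           if "1 < z*2" "z \<le> 1" "z*2 - 1 \<notin> s2" for z
  proof (rule vector_derivative_at [OF has_vector_derivative_transform_within])
    show "0 < \<bar>z - 1/2\<bar>"
      using that by auto
    have "((\<lambda>x. 2 * x - 1) has_vector_derivative 2) (at z)"
      by (simp add: has_vector_derivative_def has_derivative_def bounded_linear_mult_left)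
    moreover have "(g2 has_vector_derivative vector_derivative g2 (at (z * 2 - 1))) (at (2 * z - 1))"
      using s2 that by (auto simp: algebra_simps vector_derivative_works)
    ultimately
    show "((\<lambda>x. g2 (2 * x - 1)) has_vector_derivative 2 *\<^sub>R vector_derivative g2 (at (z * 2 - 1))) (at z)"
      by (intro vector_diff_chain_at [simplified o_def])
  qed (use that in \<open>simp_all add: dist_real_def abs_if split: if_split_asm\<close>)
  have "((\<lambda>x. norm (vector_derivative (g1 +++ g2) (at x))) has_integral plen g1) {0..1/2}"
  proof (rule has_integral_spike_finite [OF _ _ i1])
    show "finite (insert (1/2) ((*) 2 -` s1))"
      using s1 by (force intro: finite_vimageI [where h = "(*)2"] inj_onI)
  qed (auto simp add: joinpaths_def mult_ac g1)
  moreover have "((\<lambda>x. norm (vector_derivative (g1 +++ g2) (at x))) has_integral plen g2) {1/2..1}"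
  proof (rule has_integral_spike_finite [OF _ _ i2])
    show "finite (insert (1/2) ((\<lambda>x. 2 * x - 1) -` s2))"
      using s2 by (force intro: finite_vimageI [where h = "\<lambda>x. 2*x-1"] inj_onI)
  qed (auto simp add: joinpaths_def mult_ac g2)
  ultimately have J: "((\<lambda>x. norm (vector_derivative (g1 +++ g2) (at x))) has_integral (plen g1 + plen g2)) {0..1}"
    by (simp add: has_integral_combine [where c = "1/2"])
  have img: "(g1 +++ g2) ` {0..1} \<subseteq> M"
  proof -
    have "path_image (g1 +++ g2) \<subseteq> path_image g1 \<union> path_image g2"
      by (rule path_image_join_subset)
    then show ?thesis using assms by (auto simp: path_image_def rp_def)
  qed
  show ?thesis
    using vj J img e unfolding rp_def plen_def valid_path_def
    by (auto simp: joinpaths_def integral_unique has_integral_integrable)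
qed

lemma const_path: "x \<in> M \<Longrightarrow> rp M (\<lambda>t. x) x x \<and> plen (\<lambda>t. x) = 0"
  by (auto simp: rp_def plen_def vector_derivative_const_at piecewise_C1_differentiable_const)



lemma seg:
  fixes \<psi> :: "'a::euclidean_space \<Rightarrow> 'a"
  assumes der: "\<forall>x\<in>V. ((\<lambda>t. \<psi> (x + t *\<^sub>R i)) has_vector_derivative D x) (at 0)"
    and cD: "continuous_on V D"
    and inV: "\<forall>t\<in>{0..1}. c + (t * s) *\<^sub>R i \<in> V"
    and Kb: "\<forall>t\<in>{0..1}. norm (D (c + (t * s) *\<^sub>R i)) \<le> K"
    and inM: "\<forall>t\<in>{0..1}. \<psi> (c + (t * s) *\<^sub>R i) \<in> M"
  shows "\<exists>g. rp M g (\<psi> c) (\<psi> (c + s *\<^sub>R i)) \<and> plen g \<le> \<bar>s\<bar> * K"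
proof -
  define g where "g = (\<lambda>t. \<psi> (c + (t * s) *\<^sub>R i))"
  define D' where "D' = (\<lambda>t. s *\<^sub>R D (c + (t * s) *\<^sub>R i))"
  have hd: "(g has_vector_derivative D' t) (at t)" if t: "t \<in> {0..1}" for t
  proof -
    let ?x = "c + (t * s) *\<^sub>R i"
    have h: "((\<lambda>u. \<psi> (?x + u *\<^sub>R i)) has_vector_derivative D ?x) (at ((\<lambda>t'. (t' - t) * s) t))"
      using der inV t by auto
    have f: "((\<lambda>t'. (t' - t) * s) has_vector_derivative s) (at t)"
      by (auto intro!: derivative_eq_intros)
    have "((\<lambda>u. \<psi> (?x + u *\<^sub>R i)) \<circ> (\<lambda>t'. (t' - t) * s) has_vector_derivative s *\<^sub>R D ?x) (at t)"
      by (rule vector_diff_chain_at[OF f h])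
    moreover have "(\<lambda>u. \<psi> (?x + u *\<^sub>R i)) \<circ> (\<lambda>t'. (t' - t) * s) = g"
      proof
      fix t' have "?x + ((t' - t) * s) *\<^sub>R i = c + (t' * s) *\<^sub>R i"
        by (simp add: algebra_simps)
      then show "((\<lambda>u. \<psi> (?x + u *\<^sub>R i)) \<circ> (\<lambda>t'. (t' - t) * s)) t' = g t'"
        by (simp add: g_def o_def add.assoc)
    qed
    ultimately show ?thesis by (simp add: D'_def)
  qed
  have cD': "continuous_on {0..1} D'"
    unfolding D'_def
    by (intro continuous_intros continuous_on_compose2[OF cD]) (use inV in auto)
  have C1: "g C1_differentiable_on {0..1}"
    unfolding C1_differentiable_on_def using hd cD' by blast
  have vd: "vector_derivative g (at t) = D' t" if "t \<in> {0..1}" for t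
    using hd[OF that] by (rule vector_derivative_at)
  have ci: "continuous_on {0..1} (\<lambda>t. norm (D' t))"
    by (intro continuous_intros cD')
  have intD: "(\<lambda>t. norm (D' t)) integrable_on {0..1}"
    by (rule integrable_continuous_interval[OF ci])
  have int2: "(\<lambda>t. norm (vector_derivative g (at t))) integrable_on {0..1}"
    using intD by (rule integrable_eq) (simp add: vd)
  have "plen g = integral {0..1} (\<lambda>t. norm (D' t))"
    unfolding plen_def by (rule integral_cong) (simp add: vd)
  also have "\<dots> \<le> integral {0..1::real} (\<lambda>t. \<bar>s\<bar> * K)"
    proof (rule integral_le[OF intD])
      show "(\<lambda>t. \<bar>s\<bar> * K) integrable_on {0..1::real}" by (rule integrable_const_ivl)
      fix t :: real assume "t \<in> {0..1}"
      then show "norm (D' t) \<le> \<bar>s\<bar> * K" using Kb by (auto simp: D'_def intro!: mult_left_mono)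
    qed
  also have "\<dots> = \<bar>s\<bar> * K" by simp
  finally have L: "plen g \<le> \<bar>s\<bar> * K" .
  have "rp M g (\<psi> c) (\<psi> (c + s *\<^sub>R i))"
    unfolding rp_def using C1_differentiable_imp_piecewise[OF C1] int2 inM
    by (auto simp: g_def)
  with L show ?thesis by blast
qed



definition N1 :: "'a::euclidean_space \<Rightarrow> real" where "N1 w = (\<Sum>i\<in>Basis. \<bar>w \<bullet> i\<bar>)"

lemma N1_nonneg: "0 \<le> N1 w" by (auto simp: N1_def intro: sum_nonneg)

lemma N1_le: "N1 w \<le> real DIM('a) * norm (w::'a::euclidean_space)"
proof -
  have "N1 w \<le> (\<Sum>i\<in>(Basis::'a set). norm w)"
    unfolding N1_def by (rule sum_mono) (simp add: Basis_le_norm)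
  then show ?thesis by simp
qed

lemma span_Basis_repr:
  fixes w :: "'a::euclidean_space"
  assumes "B \<subseteq> Basis" "w \<in> span B"
  shows "(\<Sum>i\<in>B. (w \<bullet> i) *\<^sub>R i) = w"
proof -
  have "(\<Sum>i\<in>B. (w \<bullet> i) *\<^sub>R i) = (\<Sum>i\<in>Basis. (w \<bullet> i) *\<^sub>R i)"
  proof (rule sum.mono_neutral_left)
    show "\<forall>i\<in>Basis - B. (w \<bullet> i) *\<^sub>R i = 0"
    proof
      fix i assume i: "i \<in> Basis - B"
      have "orthogonal i w"
        by (rule orthogonal_to_span[OF assms(2)]) (use i assms(1) in \<open>auto simp: orthogonal_def intro: inner_not_same_Basis\<close>)
      then show "(w \<bullet> i) *\<^sub>R i = 0" by (simp add: orthogonal_def inner_commute)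
    qed
  qed (use assms in auto)
  also have "\<dots> = w" by (rule euclidean_representation)
  finally show ?thesis .
qed

lemma coord_path:
  fixes \<psi> :: "'a::euclidean_space \<Rightarrow> 'a"
  assumes B: "B \<subseteq> Basis"
    and der: "\<forall>i\<in>Basis. \<forall>x\<in>V. ((\<lambda>t. \<psi> (x + t *\<^sub>R i)) has_vector_derivative D i x) (at 0)"
    and cD: "\<forall>i\<in>Basis. continuous_on V (D i)"
    and VM: "\<forall>y\<in>V \<inter> span B. \<psi> y \<in> M"
    and cb: "cball x0 R \<subseteq> V"
    and Kb: "\<forall>i\<in>Basis. \<forall>x\<in>cball x0 R. norm (D i x) \<le> K" and K0: "0 \<le> K"
    and a: "a \<in> span B" and w: "w \<in> span B"
    and dw: "dist x0 a + N1 w \<le> R"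
  shows "\<exists>g. rp M g (\<psi> a) (\<psi> (a + w)) \<and> plen g \<le> N1 w * K"
proof -
  have main: "F \<subseteq> B \<longrightarrow> (\<exists>g. rp M g (\<psi> a) (\<psi> (a + (\<Sum>i\<in>F. (w \<bullet> i) *\<^sub>R i))) \<and> plen g \<le> (\<Sum>i\<in>F. \<bar>w \<bullet> i\<bar>) * K)"
    if "finite F" for F
    using that
  proof (induction F rule: finite_induct)
    case empty
    have "a \<in> cball x0 R" using dw N1_nonneg[of w] by (auto simp: dist_commute)
    then have "\<psi> a \<in> M" using cb VM a by auto
    then show ?case using const_path[of "\<psi> a" M] by auto
  next
    case (insert j F)
    show ?case
    proof
      assume jF: "insert j F \<subseteq> B"
      then obtain g1 where g1: "rp M g1 (\<psi> a) (\<psi> (a + (\<Sum>i\<in>F. (w \<bullet> i) *\<^sub>R i)))"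
        "plen g1 \<le> (\<Sum>i\<in>F. \<bar>w \<bullet> i\<bar>) * K" using insert.IH by auto
      define c where "c = a + (\<Sum>i\<in>F. (w \<bullet> i) *\<^sub>R i)"
      have jB: "j \<in> Basis" using jF B by auto
      have sub: "insert j F \<subseteq> Basis" using jF B by auto
      have inball: "c + (t * (w \<bullet> j)) *\<^sub>R j \<in> cball x0 R" if t: "t \<in> {0..1}" for t
      proof -
        have n1: "norm (\<Sum>i\<in>F. (w \<bullet> i) *\<^sub>R i) \<le> (\<Sum>i\<in>F. \<bar>w \<bullet> i\<bar>)"
          by (rule sum_norm_le) (use sub in auto)
        have n2: "norm ((t * (w \<bullet> j)) *\<^sub>R j) \<le> \<bar>w \<bullet> j\<bar>"
          using t jB by (auto simp: abs_mult intro: mult_left_le_one_le)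
        have s3: "(\<Sum>i\<in>insert j F. \<bar>w \<bullet> i\<bar>) \<le> N1 w"
          unfolding N1_def by (rule sum_mono2) (use sub in auto)
        define S where "S = (\<Sum>i\<in>F. (w \<bullet> i) *\<^sub>R i)"
        define v where "v = (t * (w \<bullet> j)) *\<^sub>R j"
        have eq: "x0 - (c + v) = (x0 - a) - (S + v)" by (simp add: c_def S_def algebra_simps)
        have "norm (x0 - (c + v)) \<le> norm (x0 - a) + norm (S + v)"
          unfolding eq by (rule norm_triangle_ineq4)
        also have "\<dots> \<le> norm (x0 - a) + (norm S + norm v)"
          using norm_triangle_ineq[of S v] by linarith
        finally have "dist x0 (c + (t * (w \<bullet> j)) *\<^sub>R j) \<le> dist x0 a + norm (\<Sum>i\<in>F. (w \<bullet> i) *\<^sub>R i) + norm ((t * (w \<bullet> j)) *\<^sub>R j)"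
          by (simp add: dist_norm S_def v_def)
        also have "\<dots> \<le> dist x0 a + N1 w"
          using n1 n2 s3 insert.hyps by simp
        finally show ?thesis using dw by simp
      qed
      have cspan: "c + (t * (w \<bullet> j)) *\<^sub>R j \<in> span B" for t
      proof -
        have "(\<Sum>i\<in>F. (w \<bullet> i) *\<^sub>R i) \<in> span B" using jF by (intro span_sum span_scale span_base) auto
        moreover have "(t * (w \<bullet> j)) *\<^sub>R j \<in> span B" using jF by (intro span_scale span_base) auto
        ultimately show ?thesis unfolding c_def using a by (intro span_add) auto
      qed
      obtain g2 where g2: "rp M g2 (\<psi> c) (\<psi> (c + (w \<bullet> j) *\<^sub>R j))" "plen g2 \<le> \<bar>w \<bullet> j\<bar> * K"
      proof -
        have iV: "\<forall>t\<in>{0..1}. c + (t * (w \<bullet> j)) *\<^sub>R j \<in> V" using inball cb by blast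
        have iK: "\<forall>t\<in>{0..1}. norm (D j (c + (t * (w \<bullet> j)) *\<^sub>R j)) \<le> K" using inball Kb jB by blast
        have iM: "\<forall>t\<in>{0..1}. \<psi> (c + (t * (w \<bullet> j)) *\<^sub>R j) \<in> M" using iV VM cspan by blast
        show ?thesis using seg[of V \<psi> j "D j" c "w \<bullet> j" K M] der cD jB iV iK iM that by blast
      qed
      have J: "rp M (g1 +++ g2) (\<psi> a) (\<psi> (c + (w \<bullet> j) *\<^sub>R j)) \<and> plen (g1 +++ g2) = plen g1 + plen g2"
        by (rule join_len) (use g1 g2 c_def in auto)
      have e: "c + (w \<bullet> j) *\<^sub>R j = a + (\<Sum>i\<in>insert j F. (w \<bullet> i) *\<^sub>R i)"
        using insert.hyps by (simp add: c_def algebra_simps)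
      show "\<exists>g. rp M g (\<psi> a) (\<psi> (a + (\<Sum>i\<in>insert j F. (w \<bullet> i) *\<^sub>R i))) \<and> plen g \<le> (\<Sum>i\<in>insert j F. \<bar>w \<bullet> i\<bar>) * K"
        using J g1(2) g2(2) insert.hyps e by (intro exI[of _ "g1 +++ g2"]) (auto simp: distrib_right)
    qed
  qed
  obtain g where "rp M g (\<psi> a) (\<psi> (a + (\<Sum>i\<in>B. (w \<bullet> i) *\<^sub>R i)))" "plen g \<le> (\<Sum>i\<in>B. \<bar>w \<bullet> i\<bar>) * K"
    using main[of B] B finite_Basis finite_subset by blast
  moreover have "(\<Sum>i\<in>B. \<bar>w \<bullet> i\<bar>) * K \<le> N1 w * K"
    using K0 B by (intro mult_right_mono) (auto simp: N1_def intro!: sum_mono2)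
  ultimately show ?thesis using span_Basis_repr[OF B w] by force
qed



lemma smooth_cont: "smooth_on S f \<Longrightarrow> continuous_on S f"
  unfolding smooth_on_def by (metis Ck.simps(1))

lemma smooth_D: "smooth_on S f \<Longrightarrow> \<exists>D. (\<forall>i\<in>Basis. \<forall>x\<in>S. ((\<lambda>t. f (x + t *\<^sub>R i)) has_vector_derivative D i x) (at 0))
          \<and> (\<forall>i\<in>Basis. continuous_on S (D i))"
  unfolding smooth_on_def by (metis Ck.simps(1,2))

lemma chart_at:
  fixes M :: "'a::euclidean_space set"
  assumes "smooth_submanifold M" "p \<in> M"
  obtains U V \<phi> \<psi> B D where "open U" "p \<in> U" "open V" "B \<subseteq> Basis" "continuous_on U (\<phi>::'a\<Rightarrow>'a)"
    "continuous_on V \<psi>" "\<phi> ` U = V" "\<forall>x\<in>U. \<psi> (\<phi> x) = x" "\<forall>x\<in>U \<inter> M. \<phi> x \<in> span B"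
    "\<forall>y\<in>V \<inter> span B. \<psi> y \<in> M"
    "\<forall>i\<in>Basis. \<forall>x\<in>V. ((\<lambda>t. \<psi> (x + t *\<^sub>R i)) has_vector_derivative D i x) (at 0)"
    "\<forall>i\<in>Basis. continuous_on V (D i)"
proof -
  obtain U V \<phi> \<psi> B where ch: "open U" "p \<in> U" "open V" "B \<subseteq> Basis"
      "smooth_on U (\<phi>::'a\<Rightarrow>'a)" "smooth_on V \<psi>" "\<phi> ` U = V"
      "\<forall>x\<in>U. \<psi> (\<phi> x) = x" "\<forall>y\<in>V. \<phi> (\<psi> y) = y" "\<phi> ` (U \<inter> M) = V \<inter> span B"
    using assms unfolding smooth_submanifold_def by metis
  obtain D where D: "\<forall>i\<in>Basis. \<forall>x\<in>V. ((\<lambda>t. \<psi> (x + t *\<^sub>R i)) has_vector_derivative D i x) (at 0)"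
    "\<forall>i\<in>Basis. continuous_on V (D i)" using smooth_D[OF ch(6)] by blast
  have 1: "\<forall>x\<in>U \<inter> M. \<phi> x \<in> span B" using ch(10) by blast
  have 2: "\<forall>y\<in>V \<inter> span B. \<psi> y \<in> M"
  proof
    fix y assume "y \<in> V \<inter> span B"
    then obtain u where "u \<in> U \<inter> M" "y = \<phi> u" using ch(10) by (metis imageE)
    then show "\<psi> y \<in> M" using ch(8) by auto
  qed
  show ?thesis
    by (rule that[OF ch(1-4) smooth_cont[OF ch(5)] smooth_cont[OF ch(6)] ch(7,8) 1 2 D])
qed



lemma local_est:
  fixes M :: "'a::euclidean_space set"
  assumes sm: "smooth_submanifold M" and p: "p \<in> M" and e: "\<epsilon> > 0"
  obtains U V \<phi> \<psi> B r where "open U" "p \<in> U" "B \<subseteq> Basis" "continuous_on U (\<phi>::'a\<Rightarrow>'a)"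
    "continuous_on V \<psi>" "\<forall>x\<in>U. \<psi> (\<phi> x) = x" "\<forall>x\<in>U \<inter> M. \<phi> x \<in> span B"
    "\<forall>y\<in>V \<inter> span B. \<psi> y \<in> M" "r > 0" "cball (\<phi> p) (3*r) \<subseteq> V"
    "\<forall>y\<in>cball (\<phi> p) (3*r). dist (\<psi> y) p < \<epsilon>"
    "\<forall>a\<in>cball (\<phi> p) (3*r) \<inter> span B. \<forall>b\<in>cball (\<phi> p) (3*r) \<inter> span B. riem_dist M (\<psi> a) (\<psi> b) \<le> ereal \<epsilon>"
proof -
  obtain U V \<phi> \<psi> B D where ch: "open U" "p \<in> U" "open V" "B \<subseteq> Basis" "continuous_on U (\<phi>::'a\<Rightarrow>'a)"
    "continuous_on V \<psi>" "\<phi> ` U = V" "\<forall>x\<in>U. \<psi> (\<phi> x) = x" "\<forall>x\<in>U \<inter> M. \<phi> x \<in> span B"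
    "\<forall>y\<in>V \<inter> span B. \<psi> y \<in> M"
    "\<forall>i\<in>Basis. \<forall>x\<in>V. ((\<lambda>t. \<psi> (x + t *\<^sub>R i)) has_vector_derivative D i x) (at 0)"
    "\<forall>i\<in>Basis. continuous_on V (D i)"
    by (rule chart_at[OF sm p])
  define x0 where "x0 = \<phi> p"
  have x0V: "x0 \<in> V" using ch(2,7) x0_def by auto
  obtain R0 where R0: "R0 > 0" "cball x0 R0 \<subseteq> V" using open_contains_cball ch(3) x0V by blast
  have "compact (\<Union>i\<in>Basis. D i ` cball x0 R0)"
    using ch(12) R0(2) by (intro compact_UN finite_Basis compact_continuous_image) (auto intro: continuous_on_subset)
  then have "bounded (\<Union>i\<in>Basis. D i ` cball x0 R0)" by (rule compact_imp_bounded)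
  then obtain K where K: "K > 0" "\<forall>y\<in>(\<Union>i\<in>Basis. D i ` cball x0 R0). norm y \<le> K"
    unfolding bounded_pos by blast
  have Kb: "\<forall>i\<in>Basis. \<forall>x\<in>cball x0 R0. norm (D i x) \<le> K" using K(2) by blast
  have "\<psi> x0 = p" using ch(8) ch(2) x0_def by auto
  have "continuous (at x0) \<psi>"
    using ch(6) ch(3) x0V continuous_on_eq_continuous_at by blast
  then obtain \<rho> where rho: "\<rho> > 0" "\<forall>y. dist y x0 < \<rho> \<longrightarrow> dist (\<psi> y) p < \<epsilon>"
    using e \<open>\<psi> x0 = p\<close> unfolding continuous_at_eps_delta by force
  define d where "d = real DIM('a)"
  have d1: "d \<ge> 1" unfolding d_def by (simp add: DIM_positive Suc_leI)
  define r where "r = min (\<rho>/4) (min (R0/(3+6*d)) (\<epsilon>/(6*d*K+1)))"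
  have "R0/(3+6*d) > 0" using R0 d1 by simp
  moreover have "\<epsilon>/(6*d*K+1) > 0" using e d1 K by (simp add: add_pos_nonneg)
  ultimately have r0: "r > 0" unfolding r_def using rho by simp
  have r1: "3*r < \<rho>" unfolding r_def using rho by linarith
  have r2: "3*r + 6*d*r \<le> R0"
  proof -
    have "r \<le> R0/(3+6*d)" unfolding r_def by linarith
    then have "r*(3+6*d) \<le> R0" using d1 by (simp add: field_simps)
    then show ?thesis by (simp add: algebra_simps)
  qed
  have r3: "6*d*r*K \<le> \<epsilon>"
  proof -
    have "r \<le> \<epsilon>/(6*d*K+1)" unfolding r_def by linarith
    moreover have "6*d*K+1 > 0" using d1 K by (simp add: add_pos_nonneg)
    ultimately have "r*(6*d*K+1) \<le> \<epsilon>" by (simp add: pos_le_divide_eq)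
    then show ?thesis using r0 by (simp add: algebra_simps)
  qed
  have "3*r \<le> R0" using r2 r0 d1 by (smt (verit) mult_nonneg_nonneg)
  then have cb: "cball x0 (3*r) \<subseteq> V" using R0(2) subset_cball by blast
  have cont: "\<forall>y\<in>cball x0 (3*r). dist (\<psi> y) p < \<epsilon>"
    using rho r1 by (auto simp: dist_commute)
  have est: "\<forall>a\<in>cball x0 (3*r) \<inter> span B. \<forall>b\<in>cball x0 (3*r) \<inter> span B. riem_dist M (\<psi> a) (\<psi> b) \<le> ereal \<epsilon>"
  proof (intro ballI)
    fix a b assume a: "a \<in> cball x0 (3*r) \<inter> span B" and b: "b \<in> cball x0 (3*r) \<inter> span B"
    define w where "w = b - a"
    have wspan: "w \<in> span B" using a b by (auto simp: w_def span_diff)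
    have "dist b a \<le> dist x0 b + dist x0 a" by (metis dist_commute dist_triangle)
    then have nw: "norm w \<le> 6*r" using a b unfolding w_def by (simp add: dist_norm)
    have N1w: "N1 w \<le> d * (6*r)"
    proof -
      have "d * norm w \<le> d * (6*r)" using nw d1 by (intro mult_left_mono) auto
      then show ?thesis using N1_le[of w] unfolding d_def by linarith
    qed
    have dw: "dist x0 a + N1 w \<le> R0" using a N1w r2 by (auto simp: algebra_simps)
    obtain g where g: "rp M g (\<psi> a) (\<psi> (a + w))" "plen g \<le> N1 w * K"
      using coord_path[OF ch(4) ch(11) ch(12) ch(10) R0(2) Kb] K(1) a wspan dw by fastforce
    have "riem_dist M (\<psi> a) (\<psi> b) \<le> ereal (plen g)" using riem_le[OF g(1)] by (simp add: w_def)
    also have "plen g \<le> \<epsilon>"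
    proof -
      have "N1 w * K \<le> d * (6*r) * K" using N1w K by (intro mult_right_mono) auto
      then show ?thesis using g(2) r3 by (simp add: algebra_simps)
    qed
    finally show "riem_dist M (\<psi> a) (\<psi> b) \<le> ereal \<epsilon>" by simp
  qed
  show ?thesis
    by (rule that[OF ch(1,2,4,5,6,8,9,10) r0 cb[unfolded x0_def] cont[unfolded x0_def] est[unfolded x0_def]])
qed



lemma riem_refl: "x \<in> M \<Longrightarrow> riem_dist M x x \<le> 0"
  using riem_le[of M "\<lambda>t. x" x x] const_path[of x M] by (simp add: zero_ereal_def)

lemma diam_pair: "diameter {y, z::'a::euclidean_space} \<le> dist y z"
  by (rule diameter_le) (auto simp: dist_norm norm_minus_commute)

lemma lebesgue_pairs:
  fixes M :: "'a::euclidean_space set"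
  assumes "compact M" "\<forall>p\<in>M. \<exists>W. open W \<and> p \<in> W \<and> Q W"
  shows "\<exists>\<eta>>0. \<forall>y\<in>M. \<forall>z\<in>M. dist y z < \<eta> \<longrightarrow> (\<exists>W. open W \<and> y \<in> W \<and> z \<in> W \<and> Q W)"
proof (cases "M = {}")
  case True then show ?thesis by (auto intro: exI[of _ 1])
next
  case False
  let ?C = "{W. open W \<and> Q W}"
  have "?C \<noteq> {}" using False assms(2) by blast
  moreover have "M \<subseteq> \<Union>?C" using assms(2) by blast
  ultimately obtain \<eta> where "0 < \<eta>" "\<And>T. \<lbrakk>T \<subseteq> M; diameter T < \<eta>\<rbrakk> \<Longrightarrow> \<exists>B \<in> ?C. T \<subseteq> B"
    using Lebesgue_number_lemma[OF assms(1), of ?C] by blast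
  note eta = this
  show ?thesis
  proof (intro exI[of _ \<eta>] conjI ballI impI)
    fix y z assume "y \<in> M" "z \<in> M" "dist y z < \<eta>"
    then have "{y, z} \<subseteq> M" "diameter {y, z} < \<eta>" using diam_pair[of y z] by auto
    then obtain B where "B \<in> ?C" "{y, z} \<subseteq> B" using eta(2) by blast
    then show "\<exists>W. open W \<and> y \<in> W \<and> z \<in> W \<and> Q W" by blast
  qed (rule eta(1))
qed

lemma CL:
  fixes M :: "'a::euclidean_space set"
  assumes cM: "compact M" and sm: "smooth_submanifold M" and e: "\<epsilon> > 0"
  shows "\<exists>\<eta>>0. \<forall>y\<in>M. \<forall>z\<in>M. dist y z < \<eta> \<longrightarrow> riem_dist M y z \<le> ereal \<epsilon>"
proof -
  have "\<forall>p\<in>M. \<exists>W. open W \<and> p \<in> W \<and> (\<forall>y\<in>W \<inter> M. \<forall>z\<in>W \<inter> M. riem_dist M y z \<le> ereal \<epsilon>)"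
  proof
    fix p assume p: "p \<in> M"
    obtain U V \<phi> \<psi> B r where ch: "open U" "p \<in> U" "B \<subseteq> Basis" "continuous_on U (\<phi>::'a\<Rightarrow>'a)"
      "continuous_on V \<psi>" "\<forall>x\<in>U. \<psi> (\<phi> x) = x" "\<forall>x\<in>U \<inter> M. \<phi> x \<in> span B"
      "\<forall>y\<in>V \<inter> span B. \<psi> y \<in> M" "r > 0" "cball (\<phi> p) (3*r) \<subseteq> V"
      "\<forall>y\<in>cball (\<phi> p) (3*r). dist (\<psi> y) p < \<epsilon>"
      "\<forall>a\<in>cball (\<phi> p) (3*r) \<inter> span B. \<forall>b\<in>cball (\<phi> p) (3*r) \<inter> span B. riem_dist M (\<psi> a) (\<psi> b) \<le> ereal \<epsilon>"
      by (rule local_est[OF sm p e])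
    define W where "W = U \<inter> \<phi> -` ball (\<phi> p) r"
    have "open W" unfolding W_def by (rule continuous_open_preimage[OF ch(4,1)]) simp
    moreover have "p \<in> W" using ch(2,9) by (simp add: W_def)
    moreover have "\<forall>y\<in>W \<inter> M. \<forall>z\<in>W \<inter> M. riem_dist M y z \<le> ereal \<epsilon>"
    proof (intro ballI)
      fix y z assume y: "y \<in> W \<inter> M" and z: "z \<in> W \<inter> M"
      have "\<phi> y \<in> cball (\<phi> p) (3*r) \<inter> span B" "\<phi> z \<in> cball (\<phi> p) (3*r) \<inter> span B"
        using y z ch(7,9) by (auto simp: W_def)
      then have "riem_dist M (\<psi> (\<phi> y)) (\<psi> (\<phi> z)) \<le> ereal \<epsilon>" using ch(12) by blast
      then show "riem_dist M y z \<le> ereal \<epsilon>" using y z ch(6) by (simp add: W_def)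
    qed
    ultimately show "\<exists>W. open W \<and> p \<in> W \<and> (\<forall>y\<in>W \<inter> M. \<forall>z\<in>W \<inter> M. riem_dist M y z \<le> ereal \<epsilon>)"
      by blast
  qed
  from lebesgue_pairs[OF cM this] show ?thesis by fast
qed



lemma PL:
  fixes M :: "'a::euclidean_space set"
  assumes cM: "compact M" and sm: "smooth_submanifold M" and e: "\<epsilon> > 0"
  shows "\<exists>\<delta>>0. \<forall>f y q. continuous_on M f \<and> (\<forall>z\<in>M. f z \<in> M) \<and> y \<in> M \<and> q \<in> M \<and> dist (f y) q < \<delta> \<longrightarrow>
           (\<exists>h. continuous_on M h \<and> (\<forall>z\<in>M. h z \<in> M) \<and> h y = q \<and> (\<forall>z\<in>M. riem_dist M (f z) (h z) \<le> ereal \<epsilon>))"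
proof -
  let ?Q = "\<lambda>W. \<forall>f y q. continuous_on M f \<and> (\<forall>z\<in>M. f z \<in> M) \<and> y \<in> M \<and> q \<in> W \<and> q \<in> M \<and> f y \<in> W \<longrightarrow>
           (\<exists>h. continuous_on M h \<and> (\<forall>z\<in>M. h z \<in> M) \<and> h y = q \<and> (\<forall>z\<in>M. riem_dist M (f z) (h z) \<le> ereal \<epsilon>))"
  have clM: "closed M" using cM by (rule compact_imp_closed)
  have "\<forall>p\<in>M. \<exists>W. open W \<and> p \<in> W \<and> ?Q W"
  proof
    fix p assume p: "p \<in> M"
    obtain U V \<phi> \<psi> B r where ch: "open U" "p \<in> U" "B \<subseteq> Basis" "continuous_on U (\<phi>::'a\<Rightarrow>'a)"
      "continuous_on V \<psi>" "\<forall>x\<in>U. \<psi> (\<phi> x) = x" "\<forall>x\<in>U \<inter> M. \<phi> x \<in> span B"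
      "\<forall>y\<in>V \<inter> span B. \<psi> y \<in> M" "r > 0" "cball (\<phi> p) (3*r) \<subseteq> V"
      "\<forall>y\<in>cball (\<phi> p) (3*r). dist (\<psi> y) p < \<epsilon>"
      "\<forall>a\<in>cball (\<phi> p) (3*r) \<inter> span B. \<forall>b\<in>cball (\<phi> p) (3*r) \<inter> span B. riem_dist M (\<psi> a) (\<psi> b) \<le> ereal \<epsilon>"
      by (rule local_est[OF sm p e])
    define x0 where "x0 = \<phi> p"
    define W where "W = U \<inter> \<phi> -` ball x0 r"
    have oW: "open W" unfolding W_def by (rule continuous_open_preimage[OF ch(4,1)]) simp
    moreover have "p \<in> W" using ch(2,9) by (simp add: W_def x0_def)
    moreover have "?Q W"
    proof (intro allI impI)
      fix f y q assume asm: "continuous_on M f \<and> (\<forall>z\<in>M. f z \<in> M) \<and> y \<in> M \<and> q \<in> W \<and> q \<in> M \<and> f y \<in> W"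
      then have cf: "continuous_on M f" and fM: "\<forall>z\<in>M. f z \<in> M" and y: "y \<in> M" and q: "q \<in> W" "q \<in> M"
        and fy: "f y \<in> W" by auto
      obtain e1 where e1: "e1 > 0" "ball (f y) e1 \<subseteq> W" using oW fy open_contains_ball by blast
      obtain \<rho> where rho: "\<rho> > 0" "\<forall>z\<in>M. dist z y < \<rho> \<longrightarrow> dist (f z) (f y) < e1"
        using cf y e1(1) unfolding continuous_on_iff by blast
      define \<rho>' where "\<rho>' = \<rho>/2"
      have rho': "\<rho>' > 0" "\<rho>' < \<rho>" using rho by (auto simp: \<rho>'_def)
      have fW: "f z \<in> W" if "z \<in> M" "dist z y \<le> \<rho>'" for z
        using rho(2) that rho' e1(2) by (force simp: dist_commute)
      define v where "v = \<phi> q - \<phi> (f y)"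
      define \<beta> where "\<beta> = (\<lambda>z. 1 - dist z y / \<rho>')"
      define g where "g = (\<lambda>z. \<psi> (\<phi> (f z) + \<beta> z *\<^sub>R v))"
      define h where "h = (\<lambda>z. if z \<in> ball y \<rho>' then g z else f z)"
      have nv: "norm v < 2*r"
      proof -
        have "\<phi> q \<in> ball x0 r" "\<phi> (f y) \<in> ball x0 r" using q fy by (auto simp: W_def)
        then have "dist (\<phi> q) (\<phi> (f y)) < 2*r"
          by (smt (verit) dist_commute dist_triangle mem_ball)
        then show ?thesis by (simp add: v_def dist_norm)
      qed
      have vspan: "v \<in> span B" unfolding v_def using q fy fM y ch(7)
        by (intro span_diff) (auto simp: W_def)
      have pts: "\<phi> (f z) \<in> cball x0 (3*r) \<inter> span B \<and> \<phi> (f z) + t *\<^sub>R v \<in> cball x0 (3*r) \<inter> span B"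
        if z: "z \<in> M" "dist z y \<le> \<rho>'" and t: "0 \<le> t" "t \<le> 1" for z t
      proof -
        have fz: "f z \<in> W" "f z \<in> M" using fW z fM by auto
        then have a: "\<phi> (f z) \<in> ball x0 r" "\<phi> (f z) \<in> span B" using ch(7) by (auto simp: W_def)
        have "norm (t *\<^sub>R v) \<le> norm v" using t by (simp add: mult_left_le_one_le)
        then have "dist x0 (\<phi> (f z) + t *\<^sub>R v) < 3*r" using a(1) nv
          by (smt (verit) dist_norm mem_ball norm_triangle_ineq4 diff_diff_eq)
        moreover have "\<phi> (f z) + t *\<^sub>R v \<in> span B" using a vspan by (intro span_add span_scale)
        ultimately show ?thesis using a ch(9) by auto
      qed
      have beta01: "0 \<le> \<beta> z" "\<beta> z \<le> 1" if "dist z y \<le> \<rho>'" for z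
        using that rho' by (auto simp: \<beta>_def)
      have hM: "\<forall>z\<in>M. h z \<in> M"
      proof
        fix z assume z: "z \<in> M"
        show "h z \<in> M"
        proof (cases "z \<in> ball y \<rho>'")
          case True
          then have "dist z y \<le> \<rho>'" by (simp add: dist_commute)
          then have "\<phi> (f z) + \<beta> z *\<^sub>R v \<in> cball x0 (3*r) \<inter> span B" using pts z beta01 by blast
          then show ?thesis using True ch(8) ch(10) by (auto simp: h_def g_def x0_def)
        qed (use fM z in \<open>auto simp: h_def\<close>)
      qed
      have hy: "h y = q"
      proof -
        have "\<beta> y = 1" by (simp add: \<beta>_def)
        moreover have "q \<in> U" "f y \<in> U" using q fy by (auto simp: W_def)
        ultimately show ?thesis using rho' ch(6) by (simp add: h_def g_def v_def)
      qed
      have hd: "\<forall>z\<in>M. riem_dist M (f z) (h z) \<le> ereal \<epsilon>"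
      proof
        fix z assume z: "z \<in> M"
        show "riem_dist M (f z) (h z) \<le> ereal \<epsilon>"
        proof (cases "z \<in> ball y \<rho>'")
          case True
          then have "dist z y \<le> \<rho>'" by (simp add: dist_commute)
          then have P: "\<phi> (f z) \<in> cball x0 (3*r) \<inter> span B" "\<phi> (f z) + \<beta> z *\<^sub>R v \<in> cball x0 (3*r) \<inter> span B"
            using pts z beta01 by blast+
          have "f z \<in> U" using fW z \<open>dist z y \<le> \<rho>'\<close> by (auto simp: W_def)
          then have "\<psi> (\<phi> (f z)) = f z" using ch(6) by auto
          then show ?thesis using ch(12) P True by (force simp: h_def g_def x0_def)
        next
          case False
          then show ?thesis using riem_refl[of "f z" M] fM z e
            by (simp add: h_def) (meson order_trans ereal_less_eq(5) less_imp_le)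
        qed
      qed
      have hc: "continuous_on M h"
      proof -
        have cs: "closed (M \<inter> cball y \<rho>')" using clM by auto
        have ct: "closed (M - ball y \<rho>')" using clM by (simp add: closed_Diff)
        have cg: "continuous_on (M \<inter> cball y \<rho>') g"
        proof -
          have c1: "continuous_on (M \<inter> cball y \<rho>') (\<lambda>z. \<phi> (f z))"
            by (rule continuous_on_compose2[OF ch(4) continuous_on_subset[OF cf]])
               (use fW in \<open>auto simp: W_def dist_commute\<close>)
          have c2: "continuous_on (M \<inter> cball y \<rho>') (\<lambda>z. \<phi> (f z) + \<beta> z *\<^sub>R v)"
            unfolding \<beta>_def by (intro continuous_intros c1) (use rho' in auto)
          show ?thesis unfolding g_def
            by (rule continuous_on_compose2[OF ch(5) c2])
               (use pts beta01 ch(10) in \<open>force simp: x0_def dist_commute\<close>)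
        qed
        have "continuous_on ((M \<inter> cball y \<rho>') \<union> (M - ball y \<rho>')) h"
          unfolding h_def
        proof (rule continuous_on_cases[OF cs ct cg continuous_on_subset[OF cf]])
          show "\<forall>z. z \<in> M \<inter> cball y \<rho>' \<and> z \<notin> ball y \<rho>' \<or> z \<in> M - ball y \<rho>' \<and> z \<in> ball y \<rho>' \<longrightarrow> g z = f z"
          proof (intro allI impI)
            fix z assume "z \<in> M \<inter> cball y \<rho>' \<and> z \<notin> ball y \<rho>' \<or> z \<in> M - ball y \<rho>' \<and> z \<in> ball y \<rho>'"
            then have z: "z \<in> M" "dist y z = \<rho>'" by auto
            then have "\<beta> z = 0" using rho' by (simp add: \<beta>_def dist_commute)
            moreover have "f z \<in> U" using fW z by (auto simp: W_def dist_commute)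
            ultimately show "g z = f z" using ch(6) by (simp add: g_def)
          qed
        qed auto
        moreover have "(M \<inter> cball y \<rho>') \<union> (M - ball y \<rho>') = M" by auto
        ultimately show ?thesis by simp
      qed
      show "\<exists>h. continuous_on M h \<and> (\<forall>z\<in>M. h z \<in> M) \<and> h y = q \<and> (\<forall>z\<in>M. riem_dist M (f z) (h z) \<le> ereal \<epsilon>)"
        using hc hM hy hd by blast
    qed
    ultimately show "\<exists>W. open W \<and> p \<in> W \<and> ?Q W" by blast
  qed
  from lebesgue_pairs[OF cM this] obtain \<delta> where "\<delta> > 0"
    "\<forall>y\<in>M. \<forall>z\<in>M. dist y z < \<delta> \<longrightarrow> (\<exists>W. open W \<and> y \<in> W \<and> z \<in> W \<and> ?Q W)" by blast
  then show ?thesis by (intro exI[of _ \<delta>]) blast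
qed



lemma finite_cont:
  fixes w :: "real \<Rightarrow> 'a::euclidean_space \<Rightarrow> 'a"
  assumes "finite L" "closed M" "\<forall>t\<in>L. continuous_on M (w t)"
  shows "continuous_on (L \<times> M) (\<lambda>(t, z). w t z)"
  using assms
proof (induction L rule: finite_induct)
  case empty then show ?case by simp
next
  case (insert t L)
  have c1: "continuous_on ({t} \<times> M) (\<lambda>(t, z). w t z)"
  proof -
    have "continuous_on ({t} \<times> M) (\<lambda>p. w t (snd p))"
      using insert.prems(2) by (intro continuous_on_compose2[of M "w t" _ snd]) (auto intro: continuous_intros)
    then show ?thesis by (rule continuous_on_eq) auto
  qed
  have "continuous_on ({t} \<times> M \<union> L \<times> M) (\<lambda>(t, z). w t z)"
    using insert by (intro continuous_on_closed_Un c1) (auto intro: closed_Times finite_imp_closed)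
  moreover have "insert t L \<times> M = {t} \<times> M \<union> L \<times> M" by auto
  ultimately show ?case by simp
qed

lemma dC0_le: "(\<And>z. z \<in> M \<Longrightarrow> d (f z) (g z) \<le> c) \<Longrightarrow> dC0 d M f g \<le> c"
  unfolding dC0_def by (rule SUP_least)

theorem mainTheorem6:
  fixes M :: "'a::euclidean_space set" and \<Lambda> :: "'l::metric_space set"
    and \<omega> :: "'l \<Rightarrow> 'a \<Rightarrow> 'a" and \<Delta> :: real
  assumes "compact M" and "smooth_submanifold M"
    and "IFS \<Lambda> M \<omega>"
    and "\<Delta> > 0"
  shows "\<exists>\<delta>>0. \<forall>(n::nat) (x::nat \<Rightarrow> 'a) (\<sigma>::nat \<Rightarrow> 'l).
     (\<forall>k\<le>n. x k \<in> M) \<and> (\<forall>k\<in>{1..n}. \<sigma> k \<in> \<Lambda>) \<and>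
     (\<forall>k\<in>{1..n}. riem_dist M (x k) (\<omega> (\<sigma> k) (x (k - 1))) \<le> ereal \<delta>)
     \<longrightarrow> (\<exists>(\<Lambda>'::real set) (\<omega>'::real \<Rightarrow> 'a \<Rightarrow> 'a) (\<sigma>'::nat \<Rightarrow> real).
           IFS \<Lambda>' M \<omega>' \<and>
           dH (riem_dist M) M \<Lambda> \<omega> \<Lambda>' \<omega>' < ereal \<Delta> \<and>
           (\<forall>k\<in>{1..n}. \<sigma>' k \<in> \<Lambda>' \<and> dC0 (riem_dist M) M (\<omega> (\<sigma> k)) (\<omega>' (\<sigma>' k)) < ereal \<Delta>) \<and>
           (\<forall>k\<le>n. riem_dist M (comp_seq \<omega>' \<sigma>' k (x 0)) (x k) < ereal \<Delta>))"
proof -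
  note cM = assms(1) and sm = assms(2)
  have clM: "closed M" using cM by (rule compact_imp_closed)
  have cL: "compact \<Lambda>" and cw: "continuous_on (\<Lambda> \<times> M) (\<lambda>(l, x). \<omega> l x)"
    and wM: "\<forall>l\<in>\<Lambda>. \<forall>x\<in>M. \<omega> l x \<in> M" using assms(3) by (auto simp: IFS_def)
  have cwl: "continuous_on M (\<omega> l)" if "l \<in> \<Lambda>" for l
  proof -
    have "continuous_on M ((\<lambda>(l, x). \<omega> l x) \<circ> (\<lambda>z. (l, z)))"
      by (rule continuous_on_compose[OF _ continuous_on_subset[OF cw]]) (use that in \<open>auto intro: continuous_intros\<close>)
    then show ?thesis by (simp add: o_def)
  qed
  define e where "e = \<Delta>/2"
  have e0: "e > 0" "e < \<Delta>" using assms(4) by (auto simp: e_def)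
  obtain \<eta> where eta: "\<eta> > 0" "\<forall>y\<in>M. \<forall>z\<in>M. dist y z < \<eta> \<longrightarrow> riem_dist M y z \<le> ereal e"
    using CL[OF cM sm e0(1)] by blast
  obtain \<delta>0 where d0: "\<delta>0 > 0" "\<forall>f y q. continuous_on M f \<and> (\<forall>z\<in>M. f z \<in> M) \<and> y \<in> M \<and> q \<in> M \<and> dist (f y) q < \<delta>0 \<longrightarrow>
           (\<exists>h. continuous_on M h \<and> (\<forall>z\<in>M. h z \<in> M) \<and> h y = q \<and> (\<forall>z\<in>M. riem_dist M (f z) (h z) \<le> ereal e))"
    using PL[OF cM sm e0(1)] by blast
  have "uniformly_continuous_on (\<Lambda> \<times> M) (\<lambda>(l, x). \<omega> l x)"
    by (rule compact_uniformly_continuous[OF cw compact_Times[OF cL cM]])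
  then obtain \<zeta> where zeta: "\<zeta> > 0" "\<forall>a\<in>\<Lambda> \<times> M. \<forall>b\<in>\<Lambda> \<times> M. dist b a < \<zeta> \<longrightarrow> dist ((\<lambda>(l, x). \<omega> l x) b) ((\<lambda>(l, x). \<omega> l x) a) < \<eta>"
    unfolding uniformly_continuous_on_def using eta(1) by blast
  have close: "riem_dist M (\<omega> l z) (\<omega> l' z) \<le> ereal e" if "l \<in> \<Lambda>" "l' \<in> \<Lambda>" "dist l l' < \<zeta>" "z \<in> M" for l l' z
  proof -
    have "dist (l, z) (l', z) < \<zeta>" using that by (simp add: dist_Pair_Pair)
    then have "dist (\<omega> l z) (\<omega> l' z) < \<eta>" using zeta(2) that by fastforce
    then show ?thesis using eta(2) wM that by blast
  qed
  obtain F where F: "F \<subseteq> \<Lambda>" "finite F" "\<Lambda> \<subseteq> (\<Union>c\<in>F. ball c \<zeta>)"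
    using compactE_image[OF cL, of \<Lambda> "\<lambda>c. ball c \<zeta>"] zeta(1) by (metis UN_I centre_in_ball open_ball subsetI)
  obtain fs where fs: "set fs = F" using finite_list[OF F(2)] by blast
  define m where "m = length fs"
  have fsL: "fs ! j \<in> \<Lambda>" if "j < m" for j using that F(1) fs m_def nth_mem by blast
  show ?thesis
  proof (rule exI[of _ "\<delta>0/2"], intro conjI allI impI)
    show "\<delta>0/2 > 0" using d0 by simp
    fix n :: nat and x :: "nat \<Rightarrow> 'a" and \<sigma> :: "nat \<Rightarrow> 'l"
    assume H: "(\<forall>k\<le>n. x k \<in> M) \<and> (\<forall>k\<in>{1..n}. \<sigma> k \<in> \<Lambda>) \<and>
     (\<forall>k\<in>{1..n}. riem_dist M (x k) (\<omega> (\<sigma> k) (x (k - 1))) \<le> ereal (\<delta>0/2))"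
    have "\<forall>k\<in>{1..n}. \<exists>h. continuous_on M h \<and> (\<forall>z\<in>M. h z \<in> M) \<and> h (x (k - 1)) = x k \<and> (\<forall>z\<in>M. riem_dist M (\<omega> (\<sigma> k) z) (h z) \<le> ereal e)"
    proof
      fix k assume k: "k \<in> {1..n}"
      have xk: "x k \<in> M" "x (k - 1) \<in> M" "\<sigma> k \<in> \<Lambda>" using H k by auto
      have "ereal (norm (\<omega> (\<sigma> k) (x (k - 1)) - x k)) \<le> ereal (\<delta>0/2)"
        using riem_ge_norm[of "\<omega> (\<sigma> k) (x (k - 1))" "x k" M] H k by (meson order_trans)
      then have "dist (\<omega> (\<sigma> k) (x (k - 1))) (x k) < \<delta>0" using d0(1) by (simp add: dist_norm)
      then show "\<exists>h. continuous_on M h \<and> (\<forall>z\<in>M. h z \<in> M) \<and> h (x (k - 1)) = x k \<and> (\<forall>z\<in>M. riem_dist M (\<omega> (\<sigma> k) z) (h z) \<le> ereal e)"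
        using d0(2) cwl[OF xk(3)] wM xk by blast
    qed
    then obtain Hf where Hf: "\<forall>k\<in>{1..n}. continuous_on M (Hf k) \<and> (\<forall>z\<in>M. Hf k z \<in> M) \<and> Hf k (x (k - 1)) = x k \<and> (\<forall>z\<in>M. riem_dist M (\<omega> (\<sigma> k) z) (Hf k z) \<le> ereal e)"
      by metis
    define G where "G = (\<lambda>j. if j < m then \<omega> (fs ! j) else Hf (j - m + 1))"
    define L' where "L' = real ` {..< m + n}"
    define w' where "w' = (\<lambda>t::real. G (nat \<lfloor>t\<rfloor>))"
    define s' where "s' = (\<lambda>k. real (m + k - 1))"
    have w'j: "w' (real j) = G j" for j by (simp add: w'_def)
    have Gc: "continuous_on M (G j) \<and> (\<forall>z\<in>M. G j z \<in> M)" if "j < m + n" for j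
    proof (cases "j < m")
      case True then show ?thesis using cwl fsL wM by (simp add: G_def)
    next
      case False then have "j - m + 1 \<in> {1..n}" using that by auto
      then show ?thesis using False Hf by (simp add: G_def)
    qed
    have IFS': "IFS L' M w'"
      unfolding IFS_def
    proof (intro conjI)
      show "compact L'" unfolding L'_def by (intro finite_imp_compact) auto
      show "continuous_on (L' \<times> M) (\<lambda>(l, x). w' l x)"
        by (rule finite_cont) (use Gc clM in \<open>auto simp: L'_def w'j\<close>)
      show "\<forall>l\<in>L'. \<forall>x\<in>M. w' l x \<in> M" using Gc by (auto simp: L'_def w'j)
    qed
    have s'L: "s' k \<in> L'" if "k \<in> {1..n}" for k
      unfolding s'_def L'_def by (rule imageI) (use that in auto)
    have Gs: "w' (s' k) = Hf k" if "k \<in> {1..n}" for k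
    proof -
      have "w' (s' k) = G (m + k - 1)" unfolding s'_def by (rule w'j)
      moreover have "\<not> (m + k - 1 < m)" "m + k - 1 - m + 1 = k" using that by auto
      ultimately show ?thesis by (simp add: G_def)
    qed
    have dk: "dC0 (riem_dist M) M (\<omega> (\<sigma> k)) (w' (s' k)) \<le> ereal e" if "k \<in> {1..n}" for k
      using Hf that Gs by (intro dC0_le) auto
    have dH: "dH (riem_dist M) M \<Lambda> \<omega> L' w' \<le> ereal e"
      unfolding dH_def
    proof (intro max.boundedI SUP_least)
      fix l assume l: "l \<in> \<Lambda>"
      then obtain c where c: "c \<in> F" "dist l c < \<zeta>" using F(3) by (auto simp: dist_commute)
      then obtain j where j: "j < m" "fs ! j = c" using fs m_def by (metis in_set_conv_nth)
      have "(INF l'\<in>L'. dC0 (riem_dist M) M (\<omega> l) (w' l')) \<le> dC0 (riem_dist M) M (\<omega> l) (w' (real j))"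
        by (rule INF_lower) (use j in \<open>auto simp: L'_def\<close>)
      also have "\<dots> \<le> ereal e"
        using j c close[of l c] l F(1) by (intro dC0_le) (auto simp: w'j G_def)
      finally show "(INF l'\<in>L'. dC0 (riem_dist M) M (\<omega> l) (w' l')) \<le> ereal e" .
    next
      fix l' assume "l' \<in> L'"
      then obtain j where j: "j < m + n" "l' = real j" by (auto simp: L'_def)
      show "(INF l\<in>\<Lambda>. dC0 (riem_dist M) M (\<omega> l) (w' l')) \<le> ereal e"
      proof (cases "j < m")
        case True
        have "(INF l\<in>\<Lambda>. dC0 (riem_dist M) M (\<omega> l) (w' l')) \<le> dC0 (riem_dist M) M (\<omega> (fs ! j)) (w' l')"
          by (rule INF_lower) (use fsL True in auto)
        also have "\<dots> \<le> ereal e"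
          using True j wM fsL eta(1) by (intro dC0_le) (auto simp: w'j G_def intro!: eta(2)[rule_format])
        finally show ?thesis .
      next
        case False
        define k where "k = j - m + 1"
        have k: "k \<in> {1..n}" using False j by (auto simp: k_def)
        have sk: "s' k = l'" using False j by (simp add: k_def s'_def)
        have "(INF l\<in>\<Lambda>. dC0 (riem_dist M) M (\<omega> l) (w' l')) \<le> dC0 (riem_dist M) M (\<omega> (\<sigma> k)) (w' l')"
          by (rule INF_lower) (use H k in auto)
        also have "\<dots> \<le> ereal e" using dk[OF k] sk by simp
        finally show ?thesis .
      qed
    qed
    have cs: "comp_seq w' s' k (x 0) = x k" if "k \<le> n" for k
      using that
    proof (induction k)
      case 0 then show ?case by simp
    next
      case (Suc k)
      have sk: "Suc k \<in> {1..n}" using Suc.prems by auto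
      then have "Hf (Suc k) (x (Suc k - 1)) = x (Suc k)" using Hf by blast
      then show ?case using Suc Gs[OF sk] by simp
    qed
    have eD: "ereal e < ereal \<Delta>" using e0 by simp
    have G2: "dH (riem_dist M) M \<Lambda> \<omega> L' w' < ereal \<Delta>" using dH eD by (rule order_le_less_trans)
    have G3: "\<forall>k\<in>{1..n}. s' k \<in> L' \<and> dC0 (riem_dist M) M (\<omega> (\<sigma> k)) (w' (s' k)) < ereal \<Delta>"
      using s'L dk eD order_le_less_trans by blast
    have G4: "\<forall>k\<le>n. riem_dist M (comp_seq w' s' k (x 0)) (x k) < ereal \<Delta>"
    proof (intro allI impI)
      fix k assume "k \<le> n"
      then have "riem_dist M (comp_seq w' s' k (x 0)) (x k) \<le> 0" using cs[of k] riem_refl[of "x k" M] H by simp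
      moreover have "(0::ereal) < ereal \<Delta>" using assms(4) by simp
      ultimately show "riem_dist M (comp_seq w' s' k (x 0)) (x k) < ereal \<Delta>"
        by (rule order_le_less_trans)
    qed
    show "\<exists>(\<Lambda>'::real set) (\<omega>'::real \<Rightarrow> 'a \<Rightarrow> 'a) (\<sigma>'::nat \<Rightarrow> real).
           IFS \<Lambda>' M \<omega>' \<and>
           dH (riem_dist M) M \<Lambda> \<omega> \<Lambda>' \<omega>' < ereal \<Delta> \<and>
           (\<forall>k\<in>{1..n}. \<sigma>' k \<in> \<Lambda>' \<and> dC0 (riem_dist M) M (\<omega> (\<sigma> k)) (\<omega>' (\<sigma>' k)) < ereal \<Delta>) \<and>
           (\<forall>k\<le>n. riem_dist M (comp_seq \<omega>' \<sigma>' k (x 0)) (x k) < ereal \<Delta>)"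
      using IFS' G2 G3 G4 by blast
  qed
qed

end
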